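(* In the setting below, let $y^\star,y'\in\mathcal{Y}$ be distinct with $p_{\mathrm{ref}}(y^\star)>0$ and $p_{\mathrm{ref}}(y')>0$. Then: (i) if $\alpha_{\mathrm{KL}}>0$, the point mass $\delta_{y^\star}$ is not a stationary point of $\mathcal{J}$ on $\mathcal{F}$; (ii) if $\alpha_{\mathrm{KL}}=0$ and $$r(y^\star)-r(y')<\alpha_{\mathrm{div}}\big(1-c(y^\star,y')\big),$$ then $\delta_{y^\star}$ is not a local maximizer of $\mathcal{J}$ on $\mathcal{F}$.
   Context: Let $\mathcal{Y}$ be a finite set of sequences, $p_{\mathrm{ref}}$ a probability distribution on $\mathcal{Y}$, $r:\mathcal{Y}\to\mathbb{R}$ a reward, $\psi:\mathcal{Y}\to\mathbb{S}^{d-1}$ a unit-norm embedding, $c(y,y')=\langle\psi(y),\psi(y')\rangle$ (cosine similarity), and $\alpha_{\mathrm{KL}}\ge0$, $\alpha_{\mathrm{div}}\ge 0$. The feasible set is $\mathcal{F}=\{p\in\Delta(\mathcal{Y}): p\ll p_{\mathrm{ref}}\}$ and the objective is $$\mathcal{J}[p]=\mathbb{E}_{y\sim p}[r(y)]-\alpha_{\mathrm{KL}}\,\mathrm{KL}(p\,\|\,p_{\mathrm{ref}})-\frac{\alpha_{\mathrm{div}}}{2}\,\mathbb{E}_{(y,y')\sim p\otimes p}[c(y,y')],$$ with $\mathrm{KL}(p\|q)=\sum_y p(y)\log\frac{p(y)}{q(y)}$ and pair expectations over two independent draws from $p$. $\delta_y$ denotes the point mass at $y$. *)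

theory Defs
  imports "HOL-Analysis.Analysis"
begin

definition is_dist :: "('y::finite \<Rightarrow> real) \<Rightarrow> bool" where
  "is_dist p \<longleftrightarrow> (\<forall>y. 0 \<le> p y) \<and> (\<Sum>y\<in>UNIV. p y) = 1"

definition abs_cont :: "('y::finite \<Rightarrow> real) \<Rightarrow> ('y \<Rightarrow> real) \<Rightarrow> bool" where
  "abs_cont p q \<longleftrightarrow> (\<forall>y. q y = 0 \<longrightarrow> p y = 0)"

definition feasible :: "('y::finite \<Rightarrow> real) \<Rightarrow> ('y \<Rightarrow> real) set" where
  "feasible pref = {p. is_dist p \<and> abs_cont p pref}"

definition KL :: "('y::finite \<Rightarrow> real) \<Rightarrow> ('y \<Rightarrow> real) \<Rightarrow> real" where
  "KL p q = (\<Sum>y\<in>UNIV. if p y = 0 then 0 else p y * ln (p y / q y))"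

definition cos_sim :: "('y \<Rightarrow> real ^ 'd) \<Rightarrow> 'y \<Rightarrow> 'y \<Rightarrow> real" where
  "cos_sim psi y y' = psi y \<bullet> psi y'"

definition objJ :: "('y::finite \<Rightarrow> real) \<Rightarrow> ('y \<Rightarrow> real) \<Rightarrow> ('y \<Rightarrow> real ^ 'd)
     \<Rightarrow> real \<Rightarrow> real \<Rightarrow> ('y \<Rightarrow> real) \<Rightarrow> real" where
  "objJ r pref psi aKL adiv p =
     (\<Sum>y\<in>UNIV. p y * r y) - aKL * KL p pref
     - adiv / 2 * (\<Sum>y\<in>UNIV. \<Sum>y'\<in>UNIV. p y * p y' * cos_sim psi y y')"

definition point_mass :: "'y \<Rightarrow> 'y \<Rightarrow> real" where
  "point_mass y0 = (\<lambda>y. if y = y0 then 1 else 0)"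

text \<open>First-order stationarity on a convex feasible set: no feasible direction
  has a positive (upper) one-sided directional derivative, i.e.
  limsup_{t->0+} (J((1-t)p + t q) - J p)/t <= 0 for every feasible q.\<close>
definition stationary_on :: "(('y \<Rightarrow> real) \<Rightarrow> real) \<Rightarrow> ('y \<Rightarrow> real) set \<Rightarrow> ('y \<Rightarrow> real) \<Rightarrow> bool" where
  "stationary_on J F p \<longleftrightarrow> p \<in> F \<and>
     (\<forall>q\<in>F. \<forall>\<epsilon>>0. \<exists>\<delta>>0. \<forall>t. 0 < t \<and> t < \<delta> \<longrightarrow>
        (J (\<lambda>y. (1 - t) * p y + t * q y) - J p) / t \<le> \<epsilon>)"

text \<open>Local maximizer on F (w.r.t. the L1 distance; all norms on the finite-dimensional
  space are equivalent).\<close>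
definition local_max_on :: "(('y::finite \<Rightarrow> real) \<Rightarrow> real) \<Rightarrow> ('y \<Rightarrow> real) set \<Rightarrow> ('y \<Rightarrow> real) \<Rightarrow> bool" where
  "local_max_on J F p \<longleftrightarrow> p \<in> F \<and>
     (\<exists>\<epsilon>>0. \<forall>q\<in>F. (\<Sum>y\<in>UNIV. \<bar>q y - p y\<bar>) < \<epsilon> \<longrightarrow> J q \<le> J p)"

end

theory Submission
  imports Defs
begin

lemma sum_pm:
  fixes f :: "'y::finite \<Rightarrow> real"
  assumes "u \<noteq> v"
  shows "(\<Sum>y\<in>UNIV. (a * point_mass u y + b * point_mass v y) * f y) = a * f u + b * f v"
proof -
  have "(\<Sum>y\<in>UNIV. (a * point_mass u y + b * point_mass v y) * f y)
      = (\<Sum>y\<in>UNIV. (if y = u then a * f u else 0) + (if y = v then b * f v else 0))"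
    by (rule sum.cong) (auto simp: point_mass_def assms)
  also have "\<dots> = a * f u + b * f v" by (simp add: sum.distrib)
  finally show ?thesis .
qed

lemma sum_pm1:
  fixes f :: "'y::finite \<Rightarrow> real"
  shows "(\<Sum>y\<in>UNIV. point_mass u y * f y) = f u"
proof -
  have "(\<Sum>y\<in>UNIV. point_mass u y * f y) = (\<Sum>y\<in>UNIV. if y = u then f u else 0)"
    by (rule sum.cong) (auto simp: point_mass_def)
  also have "\<dots> = f u" by simp
  finally show ?thesis .
qed

lemma sum_pm_plain:
  assumes "u \<noteq> v"
  shows "(\<Sum>y\<in>(UNIV::'y::finite set). a * point_mass u y + b * point_mass v y) = a + b"
  using sum_pm[OF assms, of a b "\<lambda>_. 1"] by simp

lemma J_comb:
  fixes r :: "'y::finite \<Rightarrow> real" and pref :: "'y \<Rightarrow> real"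
    and psi :: "'y \<Rightarrow> real ^ 'd"
  assumes "ys \<noteq> y'" and "0 < t" "t < 1" and n: "\<forall>y. norm (psi y) = 1"
  shows "objJ r pref psi aKL adiv (\<lambda>y. (1 - t) * point_mass ys y + t * point_mass y' y)
     = (1-t) * r ys + t * r y' - aKL * ((1-t) * ln ((1-t) / pref ys) + t * ln (t / pref y'))
       - adiv / 2 * ((1-t)^2 + 2*t*(1-t) * cos_sim psi ys y' + t^2)"
proof -
  let ?p = "\<lambda>y. (1 - t) * point_mass ys y + t * point_mass y' y"
  have c1: "cos_sim psi y y = 1" for y
    using n by (simp add: cos_sim_def flip: power2_norm_eq_inner)
  have cs: "cos_sim psi y' ys = cos_sim psi ys y'" by (simp add: cos_sim_def inner_commute)
  have kl: "KL ?p pref = (1-t) * ln ((1-t) / pref ys) + t * ln (t / pref y')"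
  proof -
    have "KL ?p pref = (\<Sum>y\<in>UNIV. (if y = ys then (1-t) * ln ((1-t) / pref ys) else 0) +
             (if y = y' then t * ln (t / pref y') else 0))"
      unfolding KL_def by (rule sum.cong) (auto simp: point_mass_def assms)
    also have "\<dots> = (1-t) * ln ((1-t) / pref ys) + t * ln (t / pref y')"
      by (simp add: sum.distrib)
    finally show ?thesis .
  qed
  have q: "(\<Sum>y\<in>UNIV. \<Sum>z\<in>UNIV. ?p y * ?p z * cos_sim psi y z)
      = (1-t)^2 + 2*t*(1-t) * cos_sim psi ys y' + t^2"
  proof -
    have "(\<Sum>y\<in>UNIV. \<Sum>z\<in>UNIV. ?p y * ?p z * cos_sim psi y z)
       = (\<Sum>y\<in>UNIV. ?p y * (\<Sum>z\<in>UNIV. ?p z * cos_sim psi y z))"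
      by (simp add: sum_distrib_left mult.assoc)
    also have "\<dots> = (\<Sum>y\<in>UNIV. ?p y * ((1-t) * cos_sim psi y ys + t * cos_sim psi y y'))"
      using sum_pm[OF assms(1), of "1-t" t "\<lambda>z. cos_sim psi _ z"] by simp
    also have "\<dots> = (1-t) * ((1-t) * cos_sim psi ys ys + t * cos_sim psi ys y')
        + t * ((1-t) * cos_sim psi y' ys + t * cos_sim psi y' y')"
      by (rule sum_pm[OF assms(1)])
    also have "\<dots> = (1-t)^2 + 2*t*(1-t) * cos_sim psi ys y' + t^2"
      by (simp add: c1 cs power2_eq_square algebra_simps)
    finally show ?thesis .
  qed
  show ?thesis unfolding objJ_def kl q
    using sum_pm[OF assms(1), of "1-t" t r] by simp
qed

lemma J_pm:
  fixes r :: "'y::finite \<Rightarrow> real" and pref :: "'y \<Rightarrow> real"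
    and psi :: "'y \<Rightarrow> real ^ 'd"
  assumes n: "\<forall>y. norm (psi y) = 1"
  shows "objJ r pref psi aKL adiv (point_mass ys) = r ys - aKL * ln (1 / pref ys) - adiv / 2"
proof -
  have c1: "cos_sim psi y y = 1" for y
    using n by (simp add: cos_sim_def flip: power2_norm_eq_inner)
  have kl: "KL (point_mass ys) pref = ln (1 / pref ys)"
  proof -
    have "KL (point_mass ys) pref = (\<Sum>y\<in>UNIV. if y = ys then ln (1 / pref ys) else 0)"
      unfolding KL_def by (rule sum.cong) (auto simp: point_mass_def)
    then show ?thesis by simp
  qed
  have q: "(\<Sum>y\<in>UNIV. \<Sum>z\<in>UNIV. point_mass ys y * point_mass ys z * cos_sim psi y z) = 1"
  proof -
    have "(\<Sum>y\<in>UNIV. \<Sum>z\<in>UNIV. point_mass ys y * point_mass ys z * cos_sim psi y z)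
       = (\<Sum>y\<in>UNIV. point_mass ys y * (\<Sum>z\<in>UNIV. point_mass ys z * cos_sim psi y z))"
      by (simp add: sum_distrib_left mult.assoc)
    also have "\<dots> = (\<Sum>y\<in>UNIV. point_mass ys y * cos_sim psi y ys)"
      by (simp add: sum_pm1)
    also have "\<dots> = 1" by (simp add: sum_pm1 c1)
    finally show ?thesis .
  qed
  show ?thesis unfolding objJ_def kl q by (simp add: sum_pm1)
qed

lemma feas_comb:
  fixes pref :: "'y::finite \<Rightarrow> real"
  assumes "ys \<noteq> y'" "0 \<le> t" "t \<le> 1" "pref ys > 0" "pref y' > 0"
  shows "(\<lambda>y. (1 - t) * point_mass ys y + t * point_mass y' y) \<in> feasible pref"
  unfolding feasible_def is_dist_def abs_cont_def
  using assms sum_pm_plain[OF assms(1), of "1-t" t]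
  by (auto simp: point_mass_def)

lemma cs_le1:
  fixes psi :: "'y \<Rightarrow> real ^ 'd"
  assumes "\<forall>y. norm (psi y) = 1"
  shows "cos_sim psi a b \<le> 1"
proof -
  have "psi a \<bullet> psi b \<le> norm (psi a) * norm (psi b)" by (rule norm_cauchy_schwarz)
  then show ?thesis using assms by (simp add: cos_sim_def)
qed

theorem mainTheorem5:
  fixes r :: "'y::finite \<Rightarrow> real" and pref :: "'y \<Rightarrow> real"
    and psi :: "'y \<Rightarrow> real ^ 'd" and aKL adiv :: real and ys y' :: 'y
  assumes "is_dist pref"
    and "\<forall>y. norm (psi y) = 1"
    and "aKL \<ge> 0" and "adiv \<ge> 0"
    and "ys \<noteq> y'" and "pref ys > 0" and "pref y' > 0"
  shows "(aKL > 0 \<longrightarrow>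
            \<not> stationary_on (objJ r pref psi aKL adiv) (feasible pref) (point_mass ys))
       \<and> (aKL = 0 \<and> r ys - r y' < adiv * (1 - cos_sim psi ys y') \<longrightarrow>
            \<not> local_max_on (objJ r pref psi aKL adiv) (feasible pref) (point_mass ys))"
proof -
  let ?J = "objJ r pref psi aKL adiv"
  let ?c = "cos_sim psi ys y'"
  have c1: "?c \<le> 1" using cs_le1[OF assms(2)] .
  have diff: "?J (\<lambda>y. (1 - t) * point_mass ys y + t * point_mass y' y) - ?J (point_mass ys)
     = t * (r y' - r ys - aKL * (ln (pref ys) - ln (pref y'))) - aKL * (1-t) * ln (1-t)
       - aKL * t * ln t + adiv * t * (1-t) * (1 - ?c)" if t: "0 < t" "t < 1" for t
  proof -
    have e1: "ln ((1-t) / pref ys) = ln (1-t) - ln (pref ys)" using t assms(6) by (simp add: ln_div)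
    have e2: "ln (t / pref y') = ln t - ln (pref y')" using t assms(7) by (simp add: ln_div)
    have e3: "ln (1 / pref ys) = - ln (pref ys)" using assms(6) by (simp add: ln_div)
    show ?thesis
      unfolding J_comb[OF assms(5) t assms(2)] J_pm[OF assms(2)] e1 e2 e3
      by (simp add: power2_eq_square algebra_simps)
  qed
  have pmf: "point_mass y' \<in> feasible pref"
    using feas_comb[OF assms(5), of 1 pref] assms by simp
  have I: "\<not> stationary_on ?J (feasible pref) (point_mass ys)" if a: "aKL > 0"
  proof
    assume "stationary_on ?J (feasible pref) (point_mass ys)"
    then obtain \<delta> where d: "\<delta> > 0" and H: "\<And>t. 0 < t \<and> t < \<delta> \<Longrightarrow>
        (?J (\<lambda>y. (1 - t) * point_mass ys y + t * point_mass y' y) - ?J (point_mass ys)) / t \<le> 1"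
      unfolding stationary_on_def using pmf by (metis zero_less_one)
    define A where "A = r y' - r ys - aKL * (ln (pref ys) - ln (pref y'))"
    define K where "K = 2 + \<bar>A\<bar>"
    define t where "t = min (\<delta>/2) (min (1/2) (exp (- K / aKL)))"
    have t0: "0 < t" "t < 1" "t < \<delta>" using d by (auto simp: t_def)
    have "ln t \<le> - K / aKL"
    proof -
      have "ln t \<le> ln (exp (- K / aKL))" using t0 by (subst ln_le_cancel_iff) (auto simp: t_def)
      then show ?thesis by simp
    qed
    then have "aKL * ln t \<le> - K" using a by (simp add: field_simps)
    then have k: "A - aKL * ln t \<ge> 2" unfolding K_def by linarith
    have l1: "ln (1 - t) \<le> 0" using t0 by simp
    have "aKL * (1-t) * ln (1-t) \<le> 0"
      using a t0 l1 by (simp add: mult_nonneg_nonpos)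
    moreover have "adiv * t * (1-t) * (1 - ?c) \<ge> 0" using assms(4) t0 c1 by simp
    moreover have "t * (A - aKL * ln t) \<ge> 2 * t" using k t0 by (simp add: mult_left_mono mult.commute)
    ultimately have "?J (\<lambda>y. (1 - t) * point_mass ys y + t * point_mass y' y) - ?J (point_mass ys) \<ge> 2 * t"
      unfolding diff[OF t0(1,2)] A_def by (simp add: algebra_simps)
    then have "(?J (\<lambda>y. (1 - t) * point_mass ys y + t * point_mass y' y) - ?J (point_mass ys)) / t \<ge> 2"
      using t0 by (simp add: field_simps)
    moreover have "(?J (\<lambda>y. (1 - t) * point_mass ys y + t * point_mass y' y) - ?J (point_mass ys)) / t \<le> 1"
      using H t0 by blast
    ultimately show False by linarith
  qed
  have II: "\<not> local_max_on ?J (feasible pref) (point_mass ys)"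
    if a: "aKL = 0" and h: "r ys - r y' < adiv * (1 - ?c)"
  proof
    assume "local_max_on ?J (feasible pref) (point_mass ys)"
    then obtain \<epsilon> where e: "\<epsilon> > 0" and H: "\<And>q. q \<in> feasible pref \<Longrightarrow>
        (\<Sum>y\<in>UNIV. \<bar>q y - point_mass ys y\<bar>) < \<epsilon> \<Longrightarrow> ?J q \<le> ?J (point_mass ys)"
      unfolding local_max_on_def by blast
    define D where "D = r y' - r ys + adiv * (1 - ?c)"
    have D0: "D > 0" using h by (simp add: D_def)
    define M where "M = adiv * (1 - ?c) + 1"
    have M0: "M \<ge> 1" using assms(4) c1 by (simp add: M_def)
    define t where "t = min (\<epsilon>/4) (min (1/2) (D / (2 * M)))"
    have t0: "0 < t" "t < 1" "t < \<epsilon>/2" using e D0 M0 by (auto simp: t_def)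
    have "t \<le> D / (2 * M)" by (simp add: t_def)
    then have "t * M \<le> D / (2 * M) * M" using M0 by (intro mult_right_mono) auto
    then have tM: "t * M \<le> D / 2" using M0 by simp
    have "adiv * t * (1 - ?c) \<le> t * M" using t0 by (simp add: M_def algebra_simps)
    then have dd: "adiv * t * (1 - ?c) \<le> D / 2" using tM by linarith
    let ?q = "\<lambda>y. (1 - t) * point_mass ys y + t * point_mass y' y"
    have qf: "?q \<in> feasible pref" using feas_comb[OF assms(5), of t pref] t0 assms by simp
    have "(\<Sum>y\<in>UNIV. \<bar>?q y - point_mass ys y\<bar>) = (\<Sum>y\<in>UNIV. t * point_mass ys y + t * point_mass y' y)"
      by (rule sum.cong) (use t0 assms(5) in \<open>auto simp: point_mass_def\<close>)
    also have "\<dots> = 2 * t" using sum_pm_plain[OF assms(5), of t t] by simp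
    finally have "(\<Sum>y\<in>UNIV. \<bar>?q y - point_mass ys y\<bar>) < \<epsilon>" using t0 by simp
    from H[OF qf this] have le: "?J ?q - ?J (point_mass ys) \<le> 0" by simp
    have "?J ?q - ?J (point_mass ys) = t * (r y' - r ys - aKL * (ln (pref ys) - ln (pref y'))) - aKL * (1-t) * ln (1-t)
       - aKL * t * ln t + adiv * t * (1-t) * (1 - ?c)" by (rule diff[OF t0(1,2)])
    also have "\<dots> = t * (D - adiv * t * (1 - ?c))" using a by (simp add: D_def algebra_simps)
    finally have "?J ?q - ?J (point_mass ys) = t * (D - adiv * t * (1 - ?c))" .
    moreover have "t * (D - adiv * t * (1 - ?c)) > 0" using t0 dd D0 by simp
    ultimately show False using le by simp
  qed
  show ?thesis using I II by blast
qed

end
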